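(* Let $(\mathcal V,\mathcal W,\lambda)$ be a FTvN system with center $C$, and let $D:\mathcal V\to\mathcal V$ be a doubly stochastic transformation that has an adjoint $D^*$. Then: (a) For every convex spectral set $K$, $D(K)\subseteq K$. (b) For every $u\in C$, $Du=u$ and $D^*u=u$. In particular, if $e$ is a unit element of the system, then $De=e$ and $D^*e=e$. (c) If $\mathcal V$ is finite dimensional, then $D^*x\prec x$ for all $x\in\mathcal V$.
   Context: A Fan-Theobald-von Neumann (FTvN) system is a triple $(\mathcal V,\mathcal W,\lambda)$ where $\mathcal V,\mathcal W$ are real inner product spaces and $\lambda:\mathcal V\to\mathcal W$ is a map such that: (A1) $\|\lambda(x)\|=\|x\|$ for all $x$; (A2) $\langle x,y\rangle\le\langle\lambda(x),\lambda(y)\rangle$ for all $x,y$; (A3) for every $c\in\mathcal V$ and $q\in\lambda(\mathcal V)$ there exists $x$ with $\lambda(x)=q$ and $\langle c,x\rangle=\langle\lambda(c),\lambda(x)\rangle$. The $\lambda$-orbit of $u$ is $[u]=\{z:\lambda(z)=\lambda(u)\}$; a set $E$ is spectral if $x\in E\Rightarrow [x]\subseteq E$. Majorization: $x\prec y$ iff $x\in\operatorname{conv}[y]$. A linear map $D:\mathcal V\to\mathcal V$ is doubly stochastic if $Dx\prec x$ for all $x\in\mathcal V$. The adjoint $D^*$ satisfies $\langle D^*x,y\rangle=\langle x,Dy\rangle$ for all $x,y$. Elements $x,y$ commute if $\langle x,y\rangle=\langle\lambda(x),\lambda(y)\rangle$; the center $C$ is the set of elements commuting with all of $\mathcal V$;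 a unit element is a nonzero $e$ with $C=\mathbb R e$. *)

theory Defs
  imports "HOL-Analysis.Analysis"
begin

definition FTvN :: "('v::real_inner \<Rightarrow> 'w::real_inner) \<Rightarrow> bool" where
  "FTvN lam \<longleftrightarrow>
     (\<forall>x. norm (lam x) = norm x) \<and>
     (\<forall>x y. inner x y \<le> inner (lam x) (lam y)) \<and>
     (\<forall>c q. q \<in> range lam \<longrightarrow> (\<exists>x. lam x = q \<and> inner c x = inner (lam c) (lam x)))"

definition orbit :: "('v \<Rightarrow> 'w) \<Rightarrow> 'v \<Rightarrow> 'v set" where
  "orbit lam u = {z. lam z = lam u}"

definition spectral :: "('v \<Rightarrow> 'w) \<Rightarrow> 'v set \<Rightarrow> bool" where
  "spectral lam E \<longleftrightarrow> (\<forall>x\<in>E. orbit lam x \<subseteq> E)"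

definition majorized :: "('v::real_vector \<Rightarrow> 'w) \<Rightarrow> 'v \<Rightarrow> 'v \<Rightarrow> bool" where
  "majorized lam x y \<longleftrightarrow> x \<in> convex hull (orbit lam y)"

definition doubly_stochastic :: "('v::real_vector \<Rightarrow> 'w) \<Rightarrow> ('v \<Rightarrow> 'v) \<Rightarrow> bool" where
  "doubly_stochastic lam D \<longleftrightarrow> linear D \<and> (\<forall>x. majorized lam (D x) x)"

definition commute :: "('v::real_inner \<Rightarrow> 'w::real_inner) \<Rightarrow> 'v \<Rightarrow> 'v \<Rightarrow> bool" where
  "commute lam x y \<longleftrightarrow> inner x y = inner (lam x) (lam y)"

definition center :: "('v::real_inner \<Rightarrow> 'w::real_inner) \<Rightarrow> 'v set" where
  "center lam = {u. \<forall>x. commute lam u x}"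

definition unit_element :: "('v::real_inner \<Rightarrow> 'w::real_inner) \<Rightarrow> 'v \<Rightarrow> bool" where
  "unit_element lam e \<longleftrightarrow> e \<noteq> 0 \<and> center lam = range (\<lambda>t::real. t *\<^sub>R e)"

end

theory Submission
  imports Defs
begin


lemma ftvn_props:
  assumes "FTvN lam"
  shows "\<And>x. norm (lam x) = norm x" "\<And>x y. inner x y \<le> inner (lam x) (lam y)"
    "\<And>c x. \<exists>z. lam z = lam x \<and> inner c z = inner (lam c) (lam z)"
  using assms unfolding FTvN_def by blast+

lemma ftvn_lip:
  assumes "FTvN lam"
  shows "norm (lam x - lam y) \<le> norm (x - y)"
proof -
  have "(norm (lam x - lam y))^2 = (norm (lam x))^2 + (norm (lam y))^2 - 2 * inner (lam x) (lam y)"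
    unfolding power2_norm_eq_inner by (simp add: inner_diff_left inner_diff_right inner_commute)
  also have "\<dots> \<le> (norm x)^2 + (norm y)^2 - 2 * inner x y"
    using ftvn_props(1)[OF assms, of x] ftvn_props(1)[OF assms, of y] ftvn_props(2)[OF assms, of x y] by simp
  also have "\<dots> = (norm (x - y))^2"
    unfolding power2_norm_eq_inner by (simp add: inner_diff_left inner_diff_right inner_commute)
  finally show ?thesis by (rule power2_le_imp_le[OF _ norm_ge_zero])
qed

lemma ftvn_cont:
  assumes "FTvN lam"
  shows "continuous_on UNIV lam"
  unfolding continuous_on_iff dist_norm
proof (intro ballI allI impI)
  fix x :: 'a and e :: real assume "e > 0"
  show "\<exists>d>0. \<forall>x'\<in>UNIV. norm (x' - x) < d \<longrightarrow> norm (lam x' - lam x) < e"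
    using \<open>e > 0\<close> ftvn_lip[OF assms] order_le_less_trans by blast
qed

lemma orbit_closed:
  assumes "FTvN lam"
  shows "closed (orbit lam x)"
  unfolding orbit_def using ftvn_cont[OF assms]
  by (intro closed_Collect_eq) auto

lemma orbit_norm:
  assumes "FTvN lam" "z \<in> orbit lam x"
  shows "norm z = norm x"
proof -
  have "lam z = lam x" using assms(2) unfolding orbit_def by simp
  then show ?thesis using ftvn_props(1)[OF assms(1), of z] ftvn_props(1)[OF assms(1), of x] by simp
qed

lemma eq_from_inner:
  fixes u z :: "'a::real_inner"
  assumes "inner u z = (norm u)^2" "norm z = norm u"
  shows "z = u"
proof -
  have "2 * inner u z = (norm u)^2 + (norm u)^2 - (norm (u - z))^2"
    using dot_norm_neg[of u z] assms(2) by simp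
  then have "(norm (u - z))^2 = 0" using assms(1) by linarith
  then show ?thesis by simp
qed

lemma center_orbit:
  assumes "FTvN lam" "u \<in> center lam"
  shows "orbit lam u = {u}"
proof -
  have "z = u" if "z \<in> orbit lam u" for z
  proof -
    have lz: "lam z = lam u" using that unfolding orbit_def by auto
    have n: "norm z = norm u" using orbit_norm[OF assms(1) that] .
    have i: "inner u z = inner (lam u) (lam u)"
      using assms(2) lz unfolding center_def commute_def by auto
    also have "\<dots> = (norm (lam u))^2"
      by (simp add: power2_norm_eq_inner)
    also have "\<dots> = (norm u)^2"
      using ftvn_props(1)[OF assms(1)] by simp
    finally have "inner u z = (norm u)^2" .
    then show ?thesis using eq_from_inner n by metis
  qed
  moreover have "u \<in> orbit lam u" unfolding orbit_def by auto
  ultimately show ?thesis by blast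
qed

lemma center_inner_D:
  assumes "FTvN lam" "u \<in> center lam" "doubly_stochastic lam D"
  shows "inner u (D y) = inner u y"
proof -
  have "orbit lam y \<subseteq> {w. inner u w = inner u y}"
    using assms(2) unfolding orbit_def center_def commute_def by auto
  then have "convex hull (orbit lam y) \<subseteq> {w. inner u w = inner u y}"
    by (intro hull_minimal) (auto simp: convex_hyperplane)
  moreover have "D y \<in> convex hull (orbit lam y)"
    using assms(3) unfolding doubly_stochastic_def majorized_def by auto
  ultimately show ?thesis by auto
qed

lemma conv_bound_D:
  assumes "FTvN lam" "doubly_stochastic lam D"
  shows "inner x (D c) \<le> inner (lam x) (lam c)"
proof -
  have "orbit lam c \<subseteq> {w. inner x w \<le> inner (lam x) (lam c)}"
    using ftvn_props(2)[OF assms(1)] unfolding orbit_def by (auto, metis)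
  then have "convex hull (orbit lam c) \<subseteq> {w. inner x w \<le> inner (lam x) (lam c)}"
    by (intro hull_minimal) (auto simp: convex_halfspace_le)
  moreover have "D c \<in> convex hull (orbit lam c)"
    using assms(2) unfolding doubly_stochastic_def majorized_def by auto
  ultimately show ?thesis by auto
qed

lemma separation:
  fixes C :: "'a::real_inner set"
  assumes "compact C" "convex C" "C \<noteq> {}" "y \<notin> C"
  shows "\<exists>c. \<forall>z\<in>C. inner c z < inner c y"
proof -
  have "continuous_on C (dist y)" by (intro continuous_intros)
  then obtain p where p: "p \<in> C" "\<forall>z\<in>C. dist y p \<le> dist y z"
    using continuous_attains_inf[OF assms(1,3)] by blast
  have "p \<noteq> y" using p assms(4) by auto
  show ?thesis
  proof (intro exI ballI)
    fix z assume "z \<in> C"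
    have "inner (y - p) (z - p) \<le> 0"
      using any_closest_point_dot[OF assms(2) compact_imp_closed[OF assms(1)] p(1) \<open>z\<in>C\<close> p(2)] .
    moreover have "inner (y - p) (y - p) > 0" using \<open>p \<noteq> y\<close> by simp
    ultimately show "inner (y - p) z < inner (y - p) y"
      by (simp add: inner_diff algebra_simps)
  qed
qed



lemma gram_schmidt_fin:
  fixes T :: "'a::real_inner set"
  assumes "finite T"
  shows "\<exists>U. finite U \<and> pairwise orthogonal U \<and> 0 \<notin> U \<and> span U = span T"
  using assms
proof (induction T)
  case empty show ?case by (intro exI[of _ "{}"]) auto
next
  case (insert a T)
  then obtain U where U: "finite U" "pairwise orthogonal U" "0 \<notin> U" "span U = span T" by blast
  define s where "s = (\<Sum>b\<in>U. (inner b a / inner b b) *\<^sub>R b)"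
  define a' where "a' = a - s"
  have s: "s \<in> span U" unfolding s_def by (simp add: span_sum span_clauses)
  have orth: "inner a' x = 0" if "x \<in> U" for x
  proof -
    have "inner s x = (\<Sum>b\<in>U. if b = x then inner x a else 0)"
      unfolding s_def inner_sum_left
    proof (rule sum.cong[OF refl])
      fix b assume "b \<in> U"
      show "inner ((inner b a / inner b b) *\<^sub>R b) x = (if b = x then inner x a else 0)"
      proof (cases "b = x")
        case True
        then have "inner x x \<noteq> 0" using U(3) that by auto
        then show ?thesis using True by simp
      next
        case False
        then have "inner b x = 0" using U(2) that \<open>b \<in> U\<close> by (auto simp: pairwise_def orthogonal_def)
        then show ?thesis using False by simp
      qed
    qed
    also have "\<dots> = inner x a" using U(1) that by simp
    finally have "inner s x = inner a x" by (simp add: inner_commute)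
    then show ?thesis by (simp add: a'_def inner_diff_left)
  qed
  show ?case
  proof (cases "a' = 0")
    case True
    then have "a \<in> span U" using s a'_def by simp
    then have "span (insert a T) = span T" using U(4) by (simp add: span_redundant)
    with U show ?thesis by blast
  next
    case False
    have po: "pairwise orthogonal (insert a' U)"
      by (rule pairwise_orthogonal_insert) (use U orth in \<open>auto simp: orthogonal_def\<close>)
    have "span (insert a' U) = span (insert a U)"
      by (rule eq_span_insert_eq) (simp add: a'_def s span_neg)
    also have "\<dots> = span (insert a T)" by (simp add: span_insert U(4))
    finally have sp: "span (insert a' U) = span (insert a T)" .
    have "finite (insert a' U)" "0 \<notin> insert a' U" using U(1,3) False by auto
    then show ?thesis using po sp by blast
  qed
qed

lemma orth_expand:
  fixes U :: "'a::real_inner set"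
  assumes U: "finite U" "pairwise orthogonal U" "0 \<notin> U" and z: "z \<in> span U"
  shows "z = (\<Sum>u\<in>U. (inner z u / inner u u) *\<^sub>R u)"
proof -
  define s where "s = (\<Sum>u\<in>U. (inner z u / inner u u) *\<^sub>R u)"
  have orth: "orthogonal (z - s) x" if "x \<in> U" for x
  proof -
    have "inner s x = (\<Sum>b\<in>U. if b = x then inner z x else 0)"
      unfolding s_def inner_sum_left
    proof (rule sum.cong[OF refl])
      fix b assume "b \<in> U"
      show "inner ((inner z b / inner b b) *\<^sub>R b) x = (if b = x then inner z x else 0)"
      proof (cases "b = x")
        case True
        then have "inner x x \<noteq> 0" using U(3) that by auto
        then show ?thesis using True by simp
      next
        case False
        then have "inner b x = 0" using U(2) that \<open>b \<in> U\<close> by (auto simp: pairwise_def orthogonal_def)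
        then show ?thesis using False by simp
      qed
    qed
    also have "\<dots> = inner z x" using U(1) that by simp
    finally show ?thesis by (simp add: orthogonal_def inner_diff_left)
  qed
  have "z - s \<in> span U" unfolding s_def using z by (simp add: span_diff span_sum span_clauses)
  then have "orthogonal (z - s) (z - s)" using orthogonal_to_span orth by blast
  then show ?thesis unfolding s_def[symmetric] by (simp add: orthogonal_def)
qed

lemma compact_coeff_box:
  fixes U :: "'a::real_normed_vector set"
  assumes "finite U"
  shows "compact ((\<lambda>f. \<Sum>u\<in>U. f u *\<^sub>R u) ` {f. \<forall>u\<in>U. \<bar>f u\<bar> \<le> R u})"
  using assms
proof (induction U)
  case empty
  have "(\<lambda>f. \<Sum>u\<in>{}. f u *\<^sub>R u) ` {f. \<forall>u\<in>{}. \<bar>f u\<bar> \<le> R u} = {0::'a}" by auto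
  then show ?case by simp
next
  case (insert a U)
  let ?A = "(\<lambda>t. t *\<^sub>R a) ` {-R a..R a}"
  let ?Q = "(\<lambda>f. \<Sum>u\<in>U. f u *\<^sub>R u) ` {f. \<forall>u\<in>U. \<bar>f u\<bar> \<le> R u}"
  have cA: "compact ?A" by (intro compact_continuous_image continuous_intros compact_Icc)
  have eq: "(\<lambda>f. \<Sum>u\<in>insert a U. f u *\<^sub>R u) ` {f. \<forall>u\<in>insert a U. \<bar>f u\<bar> \<le> R u}
      = {x + y | x y. x \<in> ?A \<and> y \<in> ?Q}"
  proof (intro set_eqI iffI)
    fix w assume "w \<in> (\<lambda>f. \<Sum>u\<in>insert a U. f u *\<^sub>R u) ` {f. \<forall>u\<in>insert a U. \<bar>f u\<bar> \<le> R u}"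
    then obtain f where f: "\<forall>u\<in>insert a U. \<bar>f u\<bar> \<le> R u" "w = (\<Sum>u\<in>insert a U. f u *\<^sub>R u)" by blast
    have w: "w = f a *\<^sub>R a + (\<Sum>u\<in>U. f u *\<^sub>R u)" using f(2) insert.hyps by simp
    have "f a *\<^sub>R a \<in> ?A" using f(1) by (intro imageI) (auto simp: abs_le_iff)
    moreover have "(\<Sum>u\<in>U. f u *\<^sub>R u) \<in> ?Q" using f(1) by auto
    ultimately show "w \<in> {x + y | x y. x \<in> ?A \<and> y \<in> ?Q}" using w by blast
  next
    fix w assume "w \<in> {x + y | x y. x \<in> ?A \<and> y \<in> ?Q}"
    then obtain t g where tg: "t \<in> {-R a..R a}" "\<forall>u\<in>U. \<bar>g u\<bar> \<le> R u"
      "w = t *\<^sub>R a + (\<Sum>u\<in>U. g u *\<^sub>R u)" by blast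
    define f where "f = g(a := t)"
    have "(\<Sum>u\<in>U. f u *\<^sub>R u) = (\<Sum>u\<in>U. g u *\<^sub>R u)"
      using insert.hyps by (intro sum.cong) (auto simp: f_def)
    then have "w = (\<Sum>u\<in>insert a U. f u *\<^sub>R u)" using tg(3) insert.hyps by (simp add: f_def)
    moreover have "\<forall>u\<in>insert a U. \<bar>f u\<bar> \<le> R u" using tg(1,2) by (auto simp: f_def abs_le_iff)
    ultimately show "w \<in> (\<lambda>f. \<Sum>u\<in>insert a U. f u *\<^sub>R u) ` {f. \<forall>u\<in>insert a U. \<bar>f u\<bar> \<le> R u}"
      by blast
  qed
  show ?case unfolding eq by (rule compact_sums[OF cA insert.IH])
qed

lemma fin_dim_compact:
  fixes S B :: "'a::real_inner set"
  assumes "finite B" "span B = UNIV" "closed S" "\<forall>z\<in>S. norm z \<le> r"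
  shows "compact S"
proof -
  obtain U where U: "finite U" "pairwise orthogonal U" "0 \<notin> U" "span U = span B"
    using gram_schmidt_fin[OF assms(1)] by blast
  let ?P = "(\<lambda>f. \<Sum>u\<in>U. f u *\<^sub>R u) ` {f. \<forall>u\<in>U. \<bar>f u\<bar> \<le> r / norm u}"
  have "S \<subseteq> ?P"
  proof
    fix z assume "z \<in> S"
    have "z = (\<Sum>u\<in>U. (inner z u / inner u u) *\<^sub>R u)"
      by (rule orth_expand) (use U assms(2) in auto)
    moreover have "\<bar>inner z u / inner u u\<bar> \<le> r / norm u" if "u \<in> U" for u
    proof -
      have nu: "norm u > 0" using U(3) that by auto
      have "\<bar>inner z u\<bar> \<le> norm z * norm u" by (rule Cauchy_Schwarz_ineq2)
      also have "\<dots> \<le> r * norm u" using \<open>z \<in> S\<close> assms(4) by (simp add: mult_right_mono)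
      finally have a: "\<bar>inner z u\<bar> \<le> r * norm u" .
      have b: "inner u u = norm u * norm u" by (simp flip: power2_norm_eq_inner add: power2_eq_square)
      have "\<bar>inner z u / inner u u\<bar> = \<bar>inner z u\<bar> / (norm u * norm u)" by (simp add: b abs_divide)
      also have "\<dots> \<le> (r * norm u) / (norm u * norm u)"
        using a nu by (intro divide_right_mono) auto
      also have "\<dots> = r / norm u" using nu by simp
      finally show ?thesis .
    qed
    ultimately show "z \<in> ?P" by (intro image_eqI[where x="\<lambda>u. inner z u / inner u u"]) auto
  qed
  then have e: "?P \<inter> S = S" by blast
  have "compact (?P \<inter> S)" by (rule compact_Int_closed[OF compact_coeff_box[OF U(1)] assms(3)])
  then show ?thesis unfolding e .
qed



lemma affdep_big:
  fixes S B :: "'a::real_vector set"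
  assumes "finite B" "span B = UNIV" "finite S" "card B + 1 < card S"
  shows "affine_dependent S"
proof -
  have "S \<noteq> {}" using assms(4) by auto
  then obtain a where a: "a \<in> S" by blast
  show ?thesis
  proof (rule ccontr)
    assume "\<not> affine_dependent S"
    then have ind: "independent ((\<lambda>x. -a + x) ` (S - {a}))"
      using affine_dependent_iff_dependent2[OF a] by simp
    have "card ((\<lambda>x. -a + x) ` (S - {a})) \<le> card B"
      using independent_span_bound[OF assms(1) ind] assms(2) by simp
    moreover have "card ((\<lambda>x. -a + x) ` (S - {a})) = card (S - {a})"
      by (rule card_image) (simp add: inj_on_def)
    moreover have "card (S - {a}) = card S - 1" using a assms(3) by simp
    ultimately show False using assms(4) by linarith
  qed
qed

lemma caratheodory_fin:
  fixes p B :: "'a::real_vector set"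
  assumes B: "finite B" "span B = UNIV" and y: "y \<in> convex hull p"
  shows "\<exists>S. finite S \<and> S \<subseteq> p \<and> card S \<le> card B + 1 \<and> y \<in> convex hull S"
proof -
  let ?P = "\<lambda>n. \<exists>S u. finite S \<and> card S = n \<and> S \<subseteq> p \<and> (\<forall>x\<in>S. 0 \<le> u x) \<and>
    sum u S = 1 \<and> (\<Sum>v\<in>S. u v *\<^sub>R v) = y"
  from y obtain N where "?P N" unfolding convex_hull_explicit by auto
  then have "\<exists>n\<le>N. (\<forall>k<n. \<not> ?P k) \<and> ?P n"
    by (rule_tac ex_least_nat_le, auto)
  then obtain n where "?P n" and smallest: "\<forall>k<n. \<not> ?P k"
    by blast
  then obtain S u where S: "finite S" "card S = n" "S\<subseteq>p"
    and u: "\<forall>x\<in>S. 0 \<le> u x" "sum u S = 1"  "(\<Sum>v\<in>S. u v *\<^sub>R v) = y" by auto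
  have "card S \<le> card B + 1"
  proof (rule ccontr, simp only: not_le)
    assume "card B + 1 < card S"
    then have "affine_dependent S"
      using affdep_big[OF B S(1)] by simp
    then obtain w v where wv: "sum w S = 0" "v\<in>S" "w v \<noteq> 0" "(\<Sum>v\<in>S. w v *\<^sub>R v) = 0"
      using affine_dependent_explicit_finite[OF S(1)] by auto
    define i where "i = (\<lambda>v. (u v) / (- w v)) ` {v\<in>S. w v < 0}"
    define t where "t = Min i"
    have "\<exists>x\<in>S. w x < 0"
    proof (rule ccontr)
      assume "\<not> (\<exists>x\<in>S. w x < 0)"
      then have "\<forall>x\<in>S. 0 \<le> w x" by auto
      then have "\<forall>x\<in>S. w x = 0" using sum_nonneg_eq_0_iff[OF S(1)] wv(1) by blast
      with wv(2,3) show False by auto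
    qed
    then have "i \<noteq> {}" unfolding i_def by auto
    then have "t \<ge> 0"
      using Min_ge_iff[of i 0] and S(1) u[unfolded le_less]
      unfolding t_def i_def
      by (auto simp: divide_le_0_iff)
    have t: "\<forall>v\<in>S. u v + t * w v \<ge> 0"
    proof
      fix v
      assume "v \<in> S"
      then have v: "0 \<le> u v"
        using u(1) by blast
      show "0 \<le> u v + t * w v"
      proof (cases "w v < 0")
        case False
        thus ?thesis using v \<open>t\<ge>0\<close> by auto
      next
        case True
        then have "t \<le> u v / (- w v)"
          using \<open>v\<in>S\<close> S unfolding t_def i_def by (auto intro: Min_le)
        then show ?thesis
          unfolding real_0_le_add_iff
          using True neg_le_minus_divide_eq by auto
      qed
    qed
    obtain a where "a \<in> S" and "t = (\<lambda>v. (u v) / (- w v)) a" and "w a < 0"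
      using Min_in[OF _ \<open>i\<noteq>{}\<close>] and S(1) unfolding i_def t_def by auto
    then have a: "a \<in> S" "u a + t * w a = 0" by auto
    have *: "\<And>f. sum f (S - {a}) = sum f S - ((f a)::'b::ab_group_add)"
      unfolding sum.remove[OF S(1) \<open>a\<in>S\<close>] by auto
    have "(\<Sum>v\<in>S. u v + t * w v) = 1"
      by (metis add.right_neutral mult_zero_right sum.distrib sum_distrib_left u(2) wv(1))
    moreover have "(\<Sum>v\<in>S. u v *\<^sub>R v + (t * w v) *\<^sub>R v) - (u a *\<^sub>R a + (t * w a) *\<^sub>R a) = y"
      unfolding sum.distrib u(3) scaleR_scaleR[symmetric] scaleR_right.sum [symmetric] wv(4)
      using a(2) [THEN eq_neg_iff_add_eq_0 [THEN iffD2]] by simp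
    ultimately have "?P (n - 1)"
      apply (rule_tac x="(S - {a})" in exI)
      apply (rule_tac x="\<lambda>v. u v + t * w v" in exI)
      using S t a
      apply (auto simp: * scaleR_left_distrib)
      done
    then show False
      using smallest[THEN spec[where x="n - 1"]] by auto
  qed
  moreover have "y \<in> convex hull S"
    unfolding convex_hull_finite[OF S(1)] using u by blast
  ultimately show ?thesis using S by blast
qed

primrec hk :: "'a::real_vector set \<Rightarrow> nat \<Rightarrow> 'a set" where
  "hk K 0 = K"
| "hk K (Suc n) = {(1 - t) *\<^sub>R a + t *\<^sub>R b | t a b. t \<in> {0..1} \<and> a \<in> K \<and> b \<in> hk K n}"

lemma hk_compact:
  fixes K :: "'a::real_normed_vector set"
  assumes "compact K"
  shows "compact (hk K n)"
proof (induction n)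
  case 0 then show ?case using assms by simp
next
  case (Suc n)
  have e: "hk K (Suc n) = (\<lambda>z. (1 - fst z) *\<^sub>R fst (snd z) + fst z *\<^sub>R snd (snd z)) ` ({0..1} \<times> (K \<times> hk K n))"
  proof (intro set_eqI iffI)
    fix x assume "x \<in> hk K (Suc n)"
    then obtain t a b where x: "x = (1 - t) *\<^sub>R a + t *\<^sub>R b" "t \<in> {0..1}" "a \<in> K" "b \<in> hk K n" by auto
    then show "x \<in> (\<lambda>z. (1 - fst z) *\<^sub>R fst (snd z) + fst z *\<^sub>R snd (snd z)) ` ({0..1} \<times> (K \<times> hk K n))"
      by (intro image_eqI[where x="(t,(a,b))"]) auto
  next
    fix x assume "x \<in> (\<lambda>z. (1 - fst z) *\<^sub>R fst (snd z) + fst z *\<^sub>R snd (snd z)) ` ({0..1} \<times> (K \<times> hk K n))"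
    then obtain t a b where x: "x = (1 - t) *\<^sub>R a + t *\<^sub>R b" "t \<in> {0..1}" "a \<in> K" "b \<in> hk K n" by auto
    then show "x \<in> hk K (Suc n)" unfolding hk.simps
      by (rule_tac CollectI, rule_tac exI[where x=t], rule_tac exI[where x=a], rule_tac exI[where x=b]) auto
  qed
  have c: "continuous_on ({0..1} \<times> (K \<times> hk K n)) (\<lambda>z. (1 - fst z) *\<^sub>R fst (snd z) + fst z *\<^sub>R snd (snd z))"
    by (intro continuous_intros)
  show ?case unfolding e
    by (rule compact_continuous_image[OF c]) (intro compact_Times compact_Icc assms Suc.IH)
qed

lemma hk_sub: "hk K n \<subseteq> convex hull K"
proof (induction n)
  case 0 then show ?case by (simp add: hull_subset)
next
  case (Suc n)
  show ?case
  proof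
    fix x assume "x \<in> hk K (Suc n)"
    then obtain t a b where x: "x = (1 - t) *\<^sub>R a + t *\<^sub>R b" "t \<in> {0..1}" "a \<in> K" "b \<in> hk K n" by auto
    have ha: "a \<in> convex hull K" using x(3) by (rule hull_inc)
    have hb: "b \<in> convex hull K" using x(4) Suc.IH by (rule subsetD[rotated])
    have "0 \<le> t" "t \<le> 1" using x(2) by auto
    then show "x \<in> convex hull K" unfolding x(1)
      using convexD[OF convex_convex_hull ha hb, of "1 - t" t] by simp
  qed
qed

lemma hk_mono:
  assumes "K \<noteq> {}"
  shows "hk K n \<subseteq> hk K (Suc n)"
proof
  fix b assume b: "b \<in> hk K n"
  obtain a where a: "a \<in> K" using assms by blast
  have "b = (1 - 1) *\<^sub>R a + (1::real) *\<^sub>R b" by simp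
  then show "b \<in> hk K (Suc n)" unfolding hk.simps
    by (rule_tac CollectI, rule_tac exI[where x=1], rule_tac exI[where x=a], rule_tac exI[where x=b]) (use a b in auto)
qed

lemma hk_mono_le:
  assumes "K \<noteq> {}" "m \<le> n"
  shows "hk K m \<subseteq> hk K n"
  using lift_Suc_mono_le[of "hk K", OF hk_mono[OF assms(1)] assms(2)] .

lemma hull_in_hk:
  assumes "finite S"
  shows "S \<noteq> {} \<Longrightarrow> S \<subseteq> K \<Longrightarrow> card S \<le> Suc n \<Longrightarrow> convex hull S \<subseteq> hk K n"
  using assms
proof (induction S arbitrary: n rule: finite_induct)
  case empty then show ?case by simp
next
  case (insert a S)
  have K: "K \<noteq> {}" using insert by auto
  show ?case
  proof (cases "S = {}")
    case True
    then have "convex hull (insert a S) = {a}" by simp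
    moreover have "a \<in> hk K 0" using insert by simp
    ultimately show ?thesis using hk_mono_le[OF K, of 0 n] by auto
  next
    case False
    have "card (insert a S) = Suc (card S)" using insert by simp
    moreover have "card S \<ge> 1" using False insert.hyps(1) by (simp add: Suc_le_eq card_gt_0_iff)
    ultimately have cn: "card S \<le> n" "1 \<le> card S" using insert.prems(3) by auto
    then obtain m where n: "n = Suc m" by (cases n) auto
    have cS: "card S \<le> Suc m" using cn n by simp
    have IH: "convex hull S \<subseteq> hk K m" using insert.IH[OF False _ cS] insert.prems by auto
    show ?thesis
    proof
      fix x assume "x \<in> convex hull (insert a S)"
      then obtain u y where xy: "x = (1 - u) *\<^sub>R a + u *\<^sub>R y" "0 \<le> u" "u \<le> 1" "y \<in> convex hull S"
        using False by (auto simp: convex_hull_insert_alt)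
      have "a \<in> K" using insert.prems by auto
      have "y \<in> hk K m" using xy(4) IH by blast
      then show "x \<in> hk K n" unfolding n hk.simps
        by (rule_tac CollectI, rule_tac exI[where x=u], rule_tac exI[where x=a], rule_tac exI[where x=y])
          (use xy \<open>a \<in> K\<close> in auto)
    qed
  qed
qed

lemma conv_compact_fin:
  fixes K B :: "'a::real_normed_vector set"
  assumes "finite B" "span B = UNIV" "compact K"
  shows "compact (convex hull K)"
proof (cases "K = {}")
  case True then show ?thesis by simp
next
  case False
  have "convex hull K = hk K (card B)"
  proof
    show "convex hull K \<subseteq> hk K (card B)"
    proof
      fix y assume "y \<in> convex hull K"
      then obtain S where S: "finite S" "S \<subseteq> K" "card S \<le> card B + 1" "y \<in> convex hull S"
        using caratheodory_fin[OF assms(1,2)] by blast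
      have "S \<noteq> {}" using S(4) by auto
      then show "y \<in> hk K (card B)" using hull_in_hk[OF S(1) _ S(2)] S(3,4) by auto
    qed
  qed (rule hk_sub)
  then show ?thesis using hk_compact[OF assms(3)] by simp
qed


theorem proposition9p2:
  fixes lam :: "'v::real_inner \<Rightarrow> 'w::real_inner" and D Dadj :: "'v \<Rightarrow> 'v"
  assumes "FTvN lam"
    and "doubly_stochastic lam D"
    and "\<forall>x y. inner (Dadj x) y = inner x (D y)"
  shows "(\<forall>K. convex K \<and> spectral lam K \<longrightarrow> D ` K \<subseteq> K)
     \<and> (\<forall>u\<in>center lam. D u = u \<and> Dadj u = u)
     \<and> (\<forall>e. unit_element lam e \<longrightarrow> D e = e \<and> Dadj e = e)
     \<and> ((\<exists>B. finite B \<and> span B = (UNIV :: 'v set)) \<longrightarrow> (\<forall>x. majorized lam (Dadj x) x))"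
proof -
  have Dm: "D x \<in> convex hull orbit lam x" for x
    using assms(2) unfolding doubly_stochastic_def majorized_def by auto
  have a: "\<forall>K. convex K \<and> spectral lam K \<longrightarrow> D ` K \<subseteq> K"
  proof (intro allI impI subsetI)
    fix K y assume K: "convex K \<and> spectral lam K" and "y \<in> D ` K"
    then obtain x where x: "x \<in> K" "y = D x" by auto
    have "orbit lam x \<subseteq> K" using K x unfolding spectral_def by auto
    then have "convex hull orbit lam x \<subseteq> K" using K by (intro hull_minimal) auto
    then show "y \<in> K" using x Dm by auto
  qed
  have b: "\<forall>u\<in>center lam. D u = u \<and> Dadj u = u"
  proof
    fix u assume u: "u \<in> center lam"
    have "D u = u" using Dm[of u] center_orbit[OF assms(1) u] by simp
    moreover have "Dadj u = u"
    proof -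
      have "inner (Dadj u - u) y = 0" for y
        using assms(3) center_inner_D[OF assms(1) u assms(2), of y] by (simp add: inner_diff_left)
      then have "inner (Dadj u - u) (Dadj u - u) = 0" by blast
      then show ?thesis by simp
    qed
    ultimately show "D u = u \<and> Dadj u = u" by blast
  qed
  have e: "\<forall>e. unit_element lam e \<longrightarrow> D e = e \<and> Dadj e = e"
  proof (intro allI impI)
    fix e assume "unit_element lam e"
    then have "e \<in> center lam" unfolding unit_element_def
      by (metis rangeI scaleR_one)
    then show "D e = e \<and> Dadj e = e" using b by blast
  qed
  have c: "(\<exists>B. finite B \<and> span B = (UNIV :: 'v set)) \<longrightarrow> (\<forall>x. majorized lam (Dadj x) x)"
  proof (intro impI allI)
    fix x assume "\<exists>B. finite B \<and> span B = (UNIV :: 'v set)"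
    then obtain B :: "'v set" where B: "finite B" "span B = UNIV" by blast
    have cO: "compact (orbit lam x)"
      by (rule fin_dim_compact[OF B orbit_closed[OF assms(1)], where r="norm x"])
        (use orbit_norm[OF assms(1)] in auto)
    have cC: "compact (convex hull (orbit lam x))" by (rule conv_compact_fin[OF B cO])
    have xO: "x \<in> orbit lam x" unfolding orbit_def by simp
    have "x \<in> convex hull (orbit lam x)" by (rule hull_inc[OF xO])
    then have ne: "convex hull (orbit lam x) \<noteq> {}" by blast
    show "majorized lam (Dadj x) x" unfolding majorized_def
    proof (rule ccontr)
      assume "Dadj x \<notin> convex hull (orbit lam x)"
      then obtain c where c: "\<forall>z\<in>convex hull (orbit lam x). inner c z < inner c (Dadj x)"
        using separation[OF cC convex_convex_hull ne] by blast
      obtain z where z: "lam z = lam x" "inner c z = inner (lam c) (lam z)"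
        using ftvn_props(3)[OF assms(1), of x c] by (elim exE conjE)
      have "z \<in> convex hull (orbit lam x)" using z(1) by (intro hull_inc) (simp add: orbit_def)
      then have "inner (lam c) (lam x) < inner c (Dadj x)" using c z by auto
      also have "inner c (Dadj x) = inner (Dadj x) c" by (rule inner_commute)
      also have "\<dots> = inner x (D c)" using assms(3) by blast
      also have "\<dots> \<le> inner (lam x) (lam c)" by (rule conv_bound_D[OF assms(1,2)])
      finally show False by (simp add: inner_commute)
    qed
  qed
  show ?thesis using a b e c by blast
qed

end
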